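(* Let $n\ge 2$ and let $G=(A,B,E)$ be a $(k,\epsilon)$-unbalanced expander with $|A|=n$, $|B|=m$ and left degree $d$, where $1/\epsilon<n$ and $d<n$. Let $\Phi$ be the $m\times n$ adjacency matrix of $G$. Then there is an absolute constant $C>1$ (independent of $n,m,k,d,\epsilon$) such that for every $p$ with $1\le p\le 1+1/\log n$ and every $k$-sparse vector $x\in\mathbb{R}^n$, $$(1-C\epsilon)\,\|x\|_p\;\le\;\|d^{-1/p}\Phi x\|_p\;\le\;(1+C\epsilon)\,\|x\|_p .$$ (In particular, for $p=1$ one may take $(1-2\epsilon)\|x\|_1\le \|\Phi x\|_1/d\le \|x\|_1$.)
   Context: A $(k,\epsilon)$-unbalanced expander is a simple bipartite graph $G=(A,B,E)$ in which every vertex of $A$ has exactly $d$ neighbours (left degree $d$) such that for every $X\subseteq A$ with $|X|\le k$, the neighbourhood $N(X)\subseteq B$ satisfies $|N(X)|\ge(1-\epsilon)d|X|$. The adjacency matrix of $G$ (with $A=\{1,\dots,n\}$, $B=\{1,\dots,m\}$) is the $m\times n$ $0$–$1$ matrix with entry $(j,i)$ equal to $1$ iff $(i,j)\in E$. A vector is $k$-sparse if it has at most $k$ nonzero coordinates. $\|x\|_p=(\sum_i|x_i|^p)^{1/p}$. *)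

theory Defs
  imports Complex_Main
begin

text \<open>Left vertex set A = {0..<n}, right vertex set B = {0..<m}; the graph is given
  by its edge set E \<subseteq> A \<times> B (a simple bipartite graph).\<close>

definition nbhd :: "(nat \<times> nat) set \<Rightarrow> nat set \<Rightarrow> nat set" where
  "nbhd E X = {j. \<exists>i\<in>X. (i, j) \<in> E}"

definition unbalanced_expander ::
  "nat \<Rightarrow> nat \<Rightarrow> nat \<Rightarrow> nat \<Rightarrow> real \<Rightarrow> (nat \<times> nat) set \<Rightarrow> bool" where
  "unbalanced_expander n m d k \<epsilon> E \<longleftrightarrow>
     E \<subseteq> {0..<n} \<times> {0..<m} \<and>
     (\<forall>i<n. card {j. (i, j) \<in> E} = d) \<and>
     (\<forall>X. X \<subseteq> {0..<n} \<longrightarrow> card X \<le> k \<longrightarrow>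
        real (card (nbhd E X)) \<ge> (1 - \<epsilon>) * real d * real (card X))"

definition adj_matrix :: "(nat \<times> nat) set \<Rightarrow> nat \<Rightarrow> nat \<Rightarrow> real" where
  "adj_matrix E j i = (if (i, j) \<in> E then 1 else 0)"

definition mat_vec :: "nat \<Rightarrow> (nat \<Rightarrow> nat \<Rightarrow> real) \<Rightarrow> (nat \<Rightarrow> real) \<Rightarrow> nat \<Rightarrow> real" where
  "mat_vec n M x = (\<lambda>j. \<Sum>i<n. M j i * x i)"

definition pnorm :: "nat \<Rightarrow> real \<Rightarrow> (nat \<Rightarrow> real) \<Rightarrow> real" where
  "pnorm n p x = (\<Sum>i<n. \<bar>x i\<bar> powr p) powr (1 / p)"

definition sparse :: "nat \<Rightarrow> nat \<Rightarrow> (nat \<Rightarrow> real) \<Rightarrow> bool" where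
  "sparse n k x \<longleftrightarrow> card {i \<in> {..<n}. x i \<noteq> 0} \<le> k"

end

theory Submission
  imports Defs
begin

lemma dpow: "0 < x \<Longrightarrow> ((\<lambda>y. y powr p - p*y) has_real_derivative (p * x powr (p-1) - p)) (at x)"
  by (rule derivative_eq_intros refl | simp add: powr_diff)+
lemma bern:
  fixes y p :: real assumes "0 < y" "1 \<le> p"
  shows "1 + p * (y - 1) \<le> y powr p"
proof (cases "1 \<le> y")
  case True
  have "(\<lambda>y. y powr p - p*y) 1 \<le> (\<lambda>y. y powr p - p*y) y"
  proof (rule DERIV_nonneg_imp_nondecreasing[OF True])
    fix x assume x: "1 \<le> x" "x \<le> y"
    have "1 \<le> x powr (p-1)" using x assms by (simp add: ge_one_powr_ge_zero)
    hence "0 \<le> p * x powr (p-1) - p" using assms by (simp add: mult_le_cancel_left1)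
    thus "\<exists>D. ((\<lambda>y. y powr p - p*y) has_real_derivative D) (at x) \<and> 0 \<le> D" using dpow[of x p] x by auto
  qed
  thus ?thesis by (simp add: algebra_simps)
next
  case False
  have "(\<lambda>y. y powr p - p*y) 1 \<le> (\<lambda>y. y powr p - p*y) y"
  proof (rule DERIV_nonpos_imp_nonincreasing[of y 1])
    show "y \<le> 1" using False by simp
  next
    fix x assume x: "y \<le> x" "x \<le> 1"
    have "x powr (p-1) \<le> 1 powr (p-1)" using x assms by (intro powr_mono2) auto
    hence "x powr (p-1) \<le> 1" by simp
    hence "p * x powr (p-1) - p \<le> 0" using assms by (simp add: mult_le_cancel_left1)
    thus "\<exists>D. ((\<lambda>y. y powr p - p*y) has_real_derivative D) (at x) \<and> D \<le> 0" using dpow[of x p] x assms by auto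
  qed
  thus ?thesis by (simp add: algebra_simps)
qed

lemma upper_j:
  fixes a b p :: real assumes "0 < a" "0 \<le> b" "1 \<le> p"
  shows "(a+b) powr p \<le> a powr p + p * b * (a+b) powr (p-1)"
proof -
  have "1 + p * (a/(a+b) - 1) \<le> (a/(a+b)) powr p" using bern assms by auto
  hence "(a+b) powr p * (1 + p * (a/(a+b) - 1)) \<le> (a+b) powr p * (a/(a+b)) powr p"
    using assms by (intro mult_left_mono) auto
  also have "\<dots> = a powr p" using assms by (simp add: powr_divide)
  also have "(a+b) powr p * (1 + p * (a/(a+b) - 1)) = (a+b) powr p - p * b * (a+b) powr (p-1)"
    using assms by (simp add: powr_diff field_simps)
  finally show ?thesis by simp
qed

lemma lower_j:
  fixes a b p y :: real assumes "0 < a" "0 \<le> b" "1 \<le> p" "a - b \<le> y"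
  shows "a powr p - p * b * a powr (p-1) \<le> y powr p"
proof (cases "b < a")
  case True
  have "1 + p * ((a-b)/a - 1) \<le> ((a-b)/a) powr p" using bern assms True by auto
  hence "a powr p * (1 + p * ((a-b)/a - 1)) \<le> a powr p * ((a-b)/a) powr p"
    using assms by (intro mult_left_mono) auto
  also have "\<dots> = (a-b) powr p" using assms True by (simp add: powr_divide)
  also have "\<dots> \<le> y powr p" using assms True by (intro powr_mono2) auto
  also have "a powr p * (1 + p * ((a-b)/a - 1)) = a powr p - p * b * a powr (p-1)"
    using assms by (simp add: powr_diff field_simps)
  finally show ?thesis by simp
next
  case False
  have "a powr p = a * a powr (p-1)" using assms by (simp add: powr_diff)
  also have "\<dots> \<le> p * b * a powr (p-1)" using False assms
    by (intro mult_right_mono) (auto intro: order_trans[of _ b] simp: mult_le_cancel_right1 )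
  finally have "a powr p \<le> p * b * a powr (p-1)" .
  moreover have "0 \<le> y powr p" by simp
  ultimately show ?thesis by linarith
qed

lemma npow_bound:
  fixes p :: real and n :: nat assumes "2 \<le> n" "1 \<le> p" "p \<le> 1 + 1 / ln (real n)"
  shows "real n powr (p-1) \<le> 3"
proof -
  have ln: "ln (real n) > 0" using assms by simp
  have "(p-1) * ln (real n) \<le> 1" using assms ln by (simp add: field_simps)
  hence "real n powr (p-1) \<le> exp 1" using assms by (simp add: powr_def mult.commute)
  thus ?thesis using exp_le by linarith
qed

lemma p_le_3:
  fixes p :: real and n :: nat assumes "2 \<le> n" "p \<le> 1 + 1 / ln (real n)"
  shows "p \<le> 3"
proof -
  have e: "exp (1/2::real) < 2"
  proof -
    have "exp (1/2::real) * exp (1/2) = exp 1" by (simp flip: exp_add)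
    hence "exp (1/2::real) ^ 2 < 2^2" using exp_le by (simp add: power2_eq_square)
    thus ?thesis by (rule power_less_imp_less_base) auto
  qed
  have "ln 2 > (1/2::real)" using e by (metis exp_gt_zero ln_exp ln_less_cancel_iff zero_less_numeral)
  moreover have "ln (real n) \<ge> ln 2" using assms by simp
  ultimately have "1 / ln (real n) \<le> 2" by (simp add: field_simps)
  thus ?thesis using assms by simp
qed

lemma edge_bound:
  fixes u a p :: real and n :: nat assumes "2 \<le> n" "1 \<le> p" "p \<le> 1 + 1 / ln (real n)"
    "0 < u" "u \<le> a"
  shows "u * a powr (p-1) \<le> 9 * u powr p + a powr p / (real n)^2"
proof (cases "u * (real n)^2 \<ge> a")
  case True
  have "(a/u) powr (p-1) \<le> ((real n)^2) powr (p-1)" using assms True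
    by (intro powr_mono2) (auto simp: field_simps)
  also have "\<dots> = real n powr (p-1) * real n powr (p-1)"
    by (simp add: power2_eq_square powr_mult)
  also have "\<dots> \<le> 3 * 3" using npow_bound[OF assms(1-3)]
    by (intro mult_mono) auto
  finally have h: "(a/u) powr (p-1) \<le> 9" by simp
  have "u * a powr (p-1) = u powr p * (a/u) powr (p-1)"
    using assms by (simp add: powr_divide powr_diff field_simps)
  also have "\<dots> \<le> u powr p * 9" using h by (intro mult_left_mono) auto
  finally have "u * a powr (p-1) \<le> u powr p * 9" .
  moreover have "0 \<le> a powr p / (real n)^2" by simp
  ultimately show ?thesis by linarith
next
  case False
  have "u * a powr (p-1) \<le> (a / (real n)^2) * a powr (p-1)"
    using False assms by (intro mult_right_mono) (auto simp: field_simps)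
  also have "\<dots> = a powr p / (real n)^2" using assms by (simp add: powr_diff)
  finally have "u * a powr (p-1) \<le> a powr p / (real n)^2" .
  moreover have "0 \<le> u powr p" by simp
  ultimately show ?thesis by linarith
qed

definition Tset :: "(nat \<times> nat) set \<Rightarrow> nat set \<Rightarrow> nat \<Rightarrow> nat set" where
  "Tset E S j = {i\<in>S. (i, j) \<in> E}"

lemma nbhd_sub:
  assumes "unbalanced_expander n m d k \<epsilon> E"
  shows "nbhd E S \<subseteq> {..<m}" "finite (nbhd E S)"
proof -
  show "nbhd E S \<subseteq> {..<m}" using assms unfolding unbalanced_expander_def nbhd_def by auto
  thus "finite (nbhd E S)" using finite_subset by blast
qed

lemma Tset_ne: "j \<in> nbhd E S \<Longrightarrow> Tset E S j \<noteq> {}"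
  unfolding nbhd_def Tset_def by auto

lemma Tset_fin: "S \<subseteq> {..<n} \<Longrightarrow> finite (Tset E S j)"
proof -
  assume "S \<subseteq> {..<n}"
  hence "Tset E S j \<subseteq> {..<n}" unfolding Tset_def by auto
  thus ?thesis using finite_subset by blast
qed

lemma Tset_sub: "Tset E S j \<subseteq> S" unfolding Tset_def by auto

lemma double_count:
  assumes ue: "unbalanced_expander n m d k \<epsilon> E" and S: "S \<subseteq> {..<n}"
  shows "(\<Sum>j\<in>nbhd E S. \<Sum>i\<in>Tset E S j. h i) = real d * (\<Sum>i\<in>S. h i)"
proof -
  have finS: "finite S" using S finite_subset by blast
  have "(\<Sum>j\<in>nbhd E S. \<Sum>i\<in>Tset E S j. h i) = (\<Sum>i\<in>S. \<Sum>j\<in>{j\<in>nbhd E S. (i,j)\<in>E}. h i)"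
    unfolding Tset_def by (rule sum.swap_restrict[symmetric, OF finS nbhd_sub(2)[OF ue]])
  also have "\<dots> = (\<Sum>i\<in>S. real d * h i)"
  proof (rule sum.cong)
    fix i assume i: "i \<in> S"
    have "{j\<in>nbhd E S. (i,j)\<in>E} = {j. (i,j)\<in>E}" using i unfolding nbhd_def by auto
    moreover have "card {j. (i,j)\<in>E} = d" using ue i S unfolding unbalanced_expander_def by auto
    ultimately show "(\<Sum>j\<in>{j\<in>nbhd E S. (i,j)\<in>E}. h i) = real d * h i" by simp
  qed simp
  finally show ?thesis by (simp add: sum_distrib_left)
qed

lemma F_max:
  assumes ue: "unbalanced_expander n m d k \<epsilon> E"
  shows "S \<subseteq> {..<n} \<Longrightarrow> card S \<le> k \<Longrightarrow> (\<forall>i\<in>S. 0 \<le> h i) \<Longrightarrow>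
    (1-\<epsilon>)*real d*(\<Sum>i\<in>S. h i) \<le> (\<Sum>j\<in>nbhd E S. Max (h ` Tset E S j))"
proof (induction "card S" arbitrary: S h rule: less_induct)
  case less
  show ?case
  proof (cases "S = {}")
    case True
    then show ?thesis by (simp add: nbhd_def)
  next
    case False
    have finS: "finite S" using less finite_subset by blast
    define \<mu> where "\<mu> = Min (h ` S)"
    have \<mu>in: "\<mu> \<in> h ` S" unfolding \<mu>_def using finS False by simp
    then obtain i0 where i0: "i0 \<in> S" "h i0 = \<mu>" by auto
    have \<mu>le: "\<forall>i\<in>S. \<mu> \<le> h i" unfolding \<mu>_def using finS by simp
    have \<mu>0: "0 \<le> \<mu>" using i0 less by auto
    define h' where "h' = (\<lambda>i. h i - \<mu>)"
    define S' where "S' = {i\<in>S. h' i > 0}"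
    have S'S: "S' \<subset> S" using i0 unfolding S'_def h'_def by auto
    have cardS': "card S' < card S" using S'S finS psubset_card_mono by blast
    have S'n: "S' \<subseteq> {..<n}" using S'S less by auto
    have h'0: "\<forall>i\<in>S'. 0 \<le> h' i" unfolding S'_def by auto
    have IH: "(1-\<epsilon>)*real d*(\<Sum>i\<in>S'. h' i) \<le> (\<Sum>j\<in>nbhd E S'. Max (h' ` Tset E S' j))"
      using less(1)[OF cardS' S'n _ h'0] cardS' less(3) by linarith
    have sumS': "(\<Sum>i\<in>S'. h' i) = (\<Sum>i\<in>S. h i) - real (card S) * \<mu>"
    proof -
      have "(\<Sum>i\<in>S'. h' i) = (\<Sum>i\<in>S. h' i)"
        by (rule sum.mono_neutral_left) (use finS S'S \<mu>le in \<open>auto simp: S'_def h'_def\<close>)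
      thus ?thesis by (simp add: h'_def sum_subtractf)
    qed
    have maxdec: "Max (h ` Tset E S j) = \<mu> + Max (h' ` Tset E S j)" if j: "j \<in> nbhd E S" for j
    proof -
      have "\<mu> + Max (h' ` Tset E S j) = Max ((+) \<mu> ` h' ` Tset E S j)"
        by (rule mono_Max_commute) (use Tset_ne[OF j] Tset_fin[OF less(2)] in \<open>auto simp: mono_def\<close>)
      also have "(+) \<mu> ` h' ` Tset E S j = h ` Tset E S j" by (auto simp: h'_def image_image)
      finally show ?thesis by simp
    qed
    have "(\<Sum>j\<in>nbhd E S. Max (h ` Tset E S j)) = real (card (nbhd E S)) * \<mu> + (\<Sum>j\<in>nbhd E S. Max (h' ` Tset E S j))"
      using maxdec by (simp add: sum.distrib)
    moreover have "(\<Sum>j\<in>nbhd E S'. Max (h' ` Tset E S' j)) \<le> (\<Sum>j\<in>nbhd E S'. Max (h' ` Tset E S j))"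
    proof (rule sum_mono)
      fix j assume j: "j \<in> nbhd E S'"
      show "Max (h' ` Tset E S' j) \<le> Max (h' ` Tset E S j)"
        by (rule Max_mono) (use Tset_ne[OF j] Tset_fin[OF less(2)] S'S in \<open>auto simp: Tset_def\<close>)
    qed
    moreover have "(\<Sum>j\<in>nbhd E S'. Max (h' ` Tset E S j)) \<le> (\<Sum>j\<in>nbhd E S. Max (h' ` Tset E S j))"
    proof (rule sum_mono2[OF nbhd_sub(2)[OF ue]])
      show "nbhd E S' \<subseteq> nbhd E S" using S'S unfolding nbhd_def by auto
      fix j assume "j \<in> nbhd E S - nbhd E S'"
      hence j: "j \<in> nbhd E S" by simp
      obtain i where "i \<in> Tset E S j" using Tset_ne[OF j] by auto
      hence "h' i \<le> Max (h' ` Tset E S j)" using Tset_fin[OF less(2)] by simp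
      moreover have "0 \<le> h' i" using \<open>i \<in> Tset E S j\<close> \<mu>le unfolding Tset_def h'_def by auto
      ultimately show "0 \<le> Max (h' ` Tset E S j)" by simp
    qed
    moreover have "(1-\<epsilon>)*real d*real (card S) \<le> real (card (nbhd E S))"
    proof -
      have Sn: "S \<subseteq> {0..<n}" using less(2) by auto
      thus ?thesis using ue less(3) unfolding unbalanced_expander_def by (auto simp: mult.assoc mult.commute mult.left_commute)
    qed
    hence "(1-\<epsilon>)*real d*real (card S) * \<mu> \<le> real (card (nbhd E S)) * \<mu>"
      using \<mu>0 by (rule mult_right_mono)
    moreover have "(1-\<epsilon>)*real d*(\<Sum>i\<in>S. h i) = (1-\<epsilon>)*real d*(\<Sum>i\<in>S'. h' i) + (1-\<epsilon>)*real d*real (card S) * \<mu>"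
    proof -
      have eq: "(\<Sum>i\<in>S. h i) = (\<Sum>i\<in>S'. h' i) + real (card S) * \<mu>" using sumS' by simp
      show ?thesis by (simp only: eq) (simp add: algebra_simps)
    qed
    ultimately show ?thesis using IH by linarith
  qed
qed

lemma y_eq:
  assumes ue: "unbalanced_expander n m d k \<epsilon> E"
  shows "mat_vec n (adj_matrix E) x j = (\<Sum>i\<in>Tset E {i\<in>{..<n}. x i \<noteq> 0} j. x i)"
  unfolding mat_vec_def adj_matrix_def
proof (rule sum.mono_neutral_cong_right)
  show "Tset E {i \<in> {..<n}. x i \<noteq> 0} j \<subseteq> {..<n}" unfolding Tset_def by auto
qed (auto simp: Tset_def)

lemma choice_g:
  fixes x :: "nat \<Rightarrow> real"
  assumes S: "S \<subseteq> {..<n}"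
  shows "\<exists>g. \<forall>j\<in>nbhd E S. g j \<in> Tset E S j \<and> (\<forall>i\<in>Tset E S j. \<bar>x i\<bar> \<le> \<bar>x (g j)\<bar>)"
proof -
  have "\<forall>j\<in>nbhd E S. \<exists>i. i \<in> Tset E S j \<and> (\<forall>i'\<in>Tset E S j. \<bar>x i'\<bar> \<le> \<bar>x i\<bar>)"
  proof
    fix j assume j: "j \<in> nbhd E S"
    let ?T = "Tset E S j"
    have fin: "finite ?T" and ne: "?T \<noteq> {}" using Tset_fin[OF S] Tset_ne[OF j] by auto
    have "Max ((\<lambda>i. \<bar>x i\<bar>) ` ?T) \<in> (\<lambda>i. \<bar>x i\<bar>) ` ?T" using fin ne by simp
    then obtain i where i: "i \<in> ?T" "\<bar>x i\<bar> = Max ((\<lambda>i. \<bar>x i\<bar>) ` ?T)" by auto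
    have "\<forall>i'\<in>?T. \<bar>x i'\<bar> \<le> \<bar>x i\<bar>" using i fin by simp
    thus "\<exists>i. i \<in> ?T \<and> (\<forall>i'\<in>?T. \<bar>x i'\<bar> \<le> \<bar>x i\<bar>)" using i by blast
  qed
  thus ?thesis by metis
qed

lemma main_p:
  assumes ue: "unbalanced_expander n m d k \<epsilon> E" and n2: "2 \<le> n" and eps: "0 < \<epsilon>"
    and en: "1/\<epsilon> < real n" and p1: "1 \<le> p" and pn: "p \<le> 1 + 1/ln (real n)"
    and sp: "sparse n k x"
  defines "S \<equiv> {i\<in>{..<n}. x i \<noteq> 0}"
  shows "(1 - 90*\<epsilon>)*real d*(\<Sum>i\<in>S. \<bar>x i\<bar> powr p) \<le> (\<Sum>j\<in>nbhd E S. \<bar>mat_vec n (adj_matrix E) x j\<bar> powr p)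
       \<and> (\<Sum>j\<in>nbhd E S. \<bar>mat_vec n (adj_matrix E) x j\<bar> powr p) \<le> (1 + 90*\<epsilon>)*real d*(\<Sum>i\<in>S. \<bar>x i\<bar> powr p)"
proof -
  define y where "y = mat_vec n (adj_matrix E) x"
  define X where "X = (\<Sum>i\<in>S. \<bar>x i\<bar> powr p)"
  define J where "J = nbhd E S"
  define Y where "Y = (\<Sum>j\<in>J. \<bar>y j\<bar> powr p)"
  have Sn: "S \<subseteq> {..<n}" unfolding S_def by auto
  have finS: "finite S" using Sn finite_subset by blast
  have cardS: "card S \<le> k" using sp unfolding sparse_def S_def by simp
  have finJ: "finite J" unfolding J_def using nbhd_sub(2)[OF ue] .
  have p3: "p \<le> 3" using p_le_3[OF n2 pn] .
  obtain g where g: "\<forall>j\<in>J. g j \<in> Tset E S j \<and> (\<forall>i\<in>Tset E S j. \<bar>x i\<bar> \<le> \<bar>x (g j)\<bar>)"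
    using choice_g[OF Sn] unfolding J_def by blast
  define a where "a j = \<bar>x (g j)\<bar>" for j
  define R where "R j = Tset E S j - {g j}" for j
  define b where "b j = (\<Sum>i\<in>R j. \<bar>x i\<bar>)" for j
  define Q where "Q j = b j * a j powr (p-1)" for j
  define h where "h i = \<bar>x i\<bar> powr p" for i
  have apos: "a j > 0" if "j \<in> J" for j using g that Tset_sub[of E S j] unfolding a_def S_def by auto
  have bnn: "b j \<ge> 0" for j unfolding b_def by (simp add: sum_nonneg)
  have Tsplit: "(\<Sum>i\<in>Tset E S j. f i) = f (g j) + (\<Sum>i\<in>R j. f i)" if "j \<in> J" for j and f :: "nat \<Rightarrow> real"
    unfolding R_def using g that Tset_fin[OF Sn] by (simp add: sum.remove)
  have yj: "y j = x (g j) + (\<Sum>i\<in>R j. x i)" if "j \<in> J" for j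
    unfolding y_def y_eq[OF ue] S_def[symmetric] using Tsplit[OF that] .
  have absR: "\<bar>\<Sum>i\<in>R j. x i\<bar> \<le> b j" for j unfolding b_def by (rule sum_abs)
  have yup: "\<bar>y j\<bar> \<le> a j + b j" if "j \<in> J" for j
    using yj[OF that] absR[of j] unfolding a_def by linarith
  have ylow: "a j - b j \<le> \<bar>y j\<bar>" if "j \<in> J" for j
    using yj[OF that] absR[of j] unfolding a_def by linarith
  have cardT: "card (Tset E S j) \<le> n" for j
    using card_mono[OF _ order_trans[OF Tset_sub Sn]] by fastforce
  have cardR: "real (card (R j)) \<le> real n" for j
  proof -
    have "card (R j) \<le> card (Tset E S j)" unfolding R_def using Tset_fin[OF Sn] by (simp add: card_mono)
    thus ?thesis using cardT[of j] by simp
  qed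
  have bnd: "a j + b j \<le> real n * a j" if j: "j \<in> J" for j
  proof -
    have "a j + b j = (\<Sum>i\<in>Tset E S j. \<bar>x i\<bar>)" using Tsplit[OF j] unfolding a_def b_def by simp
    also have "\<dots> \<le> (\<Sum>i\<in>Tset E S j. a j)" using g j unfolding a_def by (intro sum_mono) auto
    also have "\<dots> = real (card (Tset E S j)) * a j" by simp
    also have "\<dots> \<le> real n * a j" using cardT[of j] apos[OF j] by (intro mult_right_mono) auto
    finally show ?thesis .
  qed
  have Qb: "Q j \<le> 9 * (\<Sum>i\<in>R j. h i) + a j powr p / real n" if j: "j \<in> J" for j
  proof -
    have "Q j = (\<Sum>i\<in>R j. \<bar>x i\<bar> * a j powr (p-1))" unfolding Q_def b_def by (simp add: sum_distrib_right)
    also have "\<dots> \<le> (\<Sum>i\<in>R j. 9 * h i + a j powr p / (real n)^2)"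
    proof (rule sum_mono)
      fix i assume i: "i \<in> R j"
      hence "i \<in> S" "i \<in> Tset E S j" unfolding R_def using Tset_sub by auto
      hence "0 < \<bar>x i\<bar>" "\<bar>x i\<bar> \<le> a j" using g j unfolding S_def a_def by auto
      thus "\<bar>x i\<bar> * a j powr (p-1) \<le> 9 * h i + a j powr p / (real n)^2"
        unfolding h_def by (rule edge_bound[OF n2 p1 pn])
    qed
    also have "\<dots> = 9 * (\<Sum>i\<in>R j. h i) + real (card (R j)) * (a j powr p / (real n)^2)"
      by (simp add: sum.distrib sum_distrib_left)
    also have "real (card (R j)) * (a j powr p / (real n)^2) \<le> real n * (a j powr p / (real n)^2)"
      using cardR[of j] by (intro mult_right_mono) auto
    also have "real n * (a j powr p / (real n)^2) = a j powr p / real n" using n2 by (simp add: power2_eq_square)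
    finally show ?thesis by simp
  qed
  have ub: "\<bar>y j\<bar> powr p \<le> a j powr p + 9 * Q j" if j: "j \<in> J" for j
  proof -
    have "\<bar>y j\<bar> powr p \<le> (a j + b j) powr p" using yup[OF j] p1 by (intro powr_mono2) auto
    also have "\<dots> \<le> a j powr p + p * b j * (a j + b j) powr (p-1)"
      using upper_j[OF apos[OF j] bnn p1] .
    also have "(a j + b j) powr (p-1) \<le> (real n * a j) powr (p-1)"
      using bnd[OF j] apos[OF j] bnn[of j] p1 by (intro powr_mono2) auto
    also have "\<dots> = real n powr (p-1) * a j powr (p-1)" using apos[OF j] by (simp add: powr_mult)
    also have "\<dots> \<le> 3 * a j powr (p-1)" using npow_bound[OF n2 p1 pn] by (intro mult_right_mono) auto
    finally have "\<bar>y j\<bar> powr p \<le> a j powr p + p * b j * (3 * a j powr (p-1))"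
      using p1 bnn[of j] by (simp add: mult_left_mono)
    also have "p * b j * (3 * a j powr (p-1)) \<le> 3 * b j * (3 * a j powr (p-1))"
      using p3 bnn[of j] by (intro mult_right_mono) auto
    finally show ?thesis unfolding Q_def by simp
  qed
  have lb: "a j powr p - 3 * Q j \<le> \<bar>y j\<bar> powr p" if j: "j \<in> J" for j
  proof -
    have "a j powr p - p * b j * a j powr (p-1) \<le> \<bar>y j\<bar> powr p"
      using lower_j[OF apos[OF j] bnn p1 ylow[OF j]] .
    moreover have "p * b j * a j powr (p-1) \<le> 3 * b j * a j powr (p-1)"
      using p3 bnn[of j] by (intro mult_right_mono) auto
    ultimately show ?thesis unfolding Q_def by simp
  qed
  define A where "A = (\<Sum>j\<in>J. a j powr p)"
  have maxeq: "Max (h ` Tset E S j) = a j powr p" if j: "j \<in> J" for j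
  proof (rule Max_eqI)
    show "finite (h ` Tset E S j)" using Tset_fin[OF Sn] by simp
    show "a j powr p \<in> h ` Tset E S j" using g j unfolding a_def h_def by auto
    fix v assume "v \<in> h ` Tset E S j"
    then obtain i where "i \<in> Tset E S j" "v = h i" by auto
    thus "v \<le> a j powr p" using g j p1 unfolding a_def h_def by (auto intro: powr_mono2)
  qed
  have AF: "(1-\<epsilon>)*real d*X \<le> A"
  proof -
    have "(1-\<epsilon>)*real d*(\<Sum>i\<in>S. h i) \<le> (\<Sum>j\<in>nbhd E S. Max (h ` Tset E S j))"
      by (rule F_max[OF ue Sn cardS]) (simp add: h_def)
    thus ?thesis unfolding A_def X_def h_def[symmetric] J_def[symmetric] using maxeq by simp
  qed
  have DC: "(\<Sum>j\<in>J. \<Sum>i\<in>Tset E S j. h i) = real d * X"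
    unfolding J_def X_def h_def[symmetric] by (rule double_count[OF ue Sn])
  have RS: "(\<Sum>j\<in>J. \<Sum>i\<in>R j. h i) = real d * X - A"
  proof -
    have "(\<Sum>j\<in>J. \<Sum>i\<in>Tset E S j. h i) = (\<Sum>j\<in>J. a j powr p + (\<Sum>i\<in>R j. h i))"
      by (rule sum.cong) (auto simp: Tsplit a_def h_def)
    thus ?thesis using DC unfolding A_def by (simp add: sum.distrib)
  qed
  have Rnn: "(\<Sum>j\<in>J. \<Sum>i\<in>R j. h i) \<ge> 0" unfolding h_def by (intro sum_nonneg) auto
  have Xnn: "X \<ge> 0" unfolding X_def by (simp add: sum_nonneg)
  have dXnn: "real d * X \<ge> 0" using Xnn by simp
  have SQ: "(\<Sum>j\<in>J. Q j) \<le> 9 * (real d * X - A) + A / real n"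
  proof -
    have "(\<Sum>j\<in>J. Q j) \<le> (\<Sum>j\<in>J. 9 * (\<Sum>i\<in>R j. h i) + a j powr p / real n)"
      using Qb by (intro sum_mono) auto
    also have "\<dots> = 9 * (\<Sum>j\<in>J. \<Sum>i\<in>R j. h i) + A / real n"
      unfolding A_def by (simp add: sum.distrib sum_distrib_left sum_divide_distrib)
    finally show ?thesis using RS by simp
  qed
  have An: "A / real n \<le> \<epsilon> * (real d * X)"
  proof -
    have "1 / real n < \<epsilon>" using en eps n2 by (simp add: field_simps)
    have "A / real n \<le> real d * X / real n" using RS Rnn n2 by (intro divide_right_mono) auto
    also have "\<dots> = real d * X * (1 / real n)" by simp
    also have "\<dots> \<le> real d * X * \<epsilon>" using \<open>1 / real n < \<epsilon>\<close> dXnn by (intro mult_left_mono) auto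
    finally show ?thesis by (simp add: mult.commute)
  qed
  have AF': "real d * X - A \<le> \<epsilon> * (real d * X)" using AF by (simp add: algebra_simps)
  have SQ': "(\<Sum>j\<in>J. Q j) \<le> 10 * (\<epsilon> * (real d * X))" 
  proof -
    have "9 * (real d * X - A) \<le> 9 * (\<epsilon> * (real d * X))" using AF' by simp
    thus ?thesis using SQ An by simp
  qed
  have Yup: "Y \<le> A + 9 * (\<Sum>j\<in>J. Q j)"
  proof -
    have "Y \<le> (\<Sum>j\<in>J. a j powr p + 9 * Q j)" unfolding Y_def using ub by (intro sum_mono) auto
    thus ?thesis unfolding A_def by (simp add: sum.distrib sum_distrib_left)
  qed
  have Ylow: "A - 3 * (\<Sum>j\<in>J. Q j) \<le> Y"
  proof -
    have "(\<Sum>j\<in>J. a j powr p - 3 * Q j) \<le> Y" unfolding Y_def using lb by (intro sum_mono) auto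
    thus ?thesis unfolding A_def by (simp add: sum_subtractf sum_distrib_left)
  qed
  have AdX: "A \<le> real d * X" using RS Rnn by linarith
  have e1: "(1 - 90*\<epsilon>)*real d*X = real d * X - 90 * (\<epsilon> * (real d * X))" by (simp add: algebra_simps)
  have e2: "(1 + 90*\<epsilon>)*real d*X = real d * X + 90 * (\<epsilon> * (real d * X))" by (simp add: algebra_simps)
  have e3: "(1-\<epsilon>)*real d*X = real d * X - \<epsilon> * (real d * X)" by (simp add: algebra_simps)
  have "(1 - 90*\<epsilon>)*real d*X \<le> Y \<and> Y \<le> (1 + 90*\<epsilon>)*real d*X"
    unfolding e1 e2 using Yup Ylow SQ' AdX AF e3 eps dXnn
    by (smt (verit) mult_nonneg_nonneg)
  thus ?thesis unfolding X_def Y_def J_def y_def .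
qed

lemma main_1:
  assumes ue: "unbalanced_expander n m d k \<epsilon> E" and sp: "sparse n k x"
  defines "S \<equiv> {i\<in>{..<n}. x i \<noteq> 0}"
  shows "(1 - 2*\<epsilon>)*real d*(\<Sum>i\<in>S. \<bar>x i\<bar>) \<le> (\<Sum>j\<in>nbhd E S. \<bar>mat_vec n (adj_matrix E) x j\<bar>)
       \<and> (\<Sum>j\<in>nbhd E S. \<bar>mat_vec n (adj_matrix E) x j\<bar>) \<le> real d*(\<Sum>i\<in>S. \<bar>x i\<bar>)"
proof -
  define y where "y = mat_vec n (adj_matrix E) x"
  define X where "X = (\<Sum>i\<in>S. \<bar>x i\<bar>)"
  define J where "J = nbhd E S"
  define Y where "Y = (\<Sum>j\<in>J. \<bar>y j\<bar>)"
  have Sn: "S \<subseteq> {..<n}" unfolding S_def by auto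
  have cardS: "card S \<le> k" using sp unfolding sparse_def S_def by simp
  obtain g where g: "\<forall>j\<in>J. g j \<in> Tset E S j \<and> (\<forall>i\<in>Tset E S j. \<bar>x i\<bar> \<le> \<bar>x (g j)\<bar>)"
    using choice_g[OF Sn] unfolding J_def by blast
  define a where "a j = \<bar>x (g j)\<bar>" for j
  define R where "R j = Tset E S j - {g j}" for j
  define b where "b j = (\<Sum>i\<in>R j. \<bar>x i\<bar>)" for j
  have Tsplit: "(\<Sum>i\<in>Tset E S j. f i) = f (g j) + (\<Sum>i\<in>R j. f i)" if "j \<in> J" for j and f :: "nat \<Rightarrow> real"
    unfolding R_def using g that Tset_fin[OF Sn] by (simp add: sum.remove)
  have yj: "y j = x (g j) + (\<Sum>i\<in>R j. x i)" if "j \<in> J" for j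
    unfolding y_def y_eq[OF ue] S_def[symmetric] using Tsplit[OF that] .
  have absR: "\<bar>\<Sum>i\<in>R j. x i\<bar> \<le> b j" for j unfolding b_def by (rule sum_abs)
  have yup: "\<bar>y j\<bar> \<le> a j + b j" if "j \<in> J" for j
    using yj[OF that] absR[of j] unfolding a_def by linarith
  have ylow: "a j - b j \<le> \<bar>y j\<bar>" if "j \<in> J" for j
    using yj[OF that] absR[of j] unfolding a_def by linarith
  have wj: "a j + b j = (\<Sum>i\<in>Tset E S j. \<bar>x i\<bar>)" if "j \<in> J" for j
    using Tsplit[OF that] unfolding a_def b_def by simp
  define A where "A = (\<Sum>j\<in>J. a j)"
  have DC: "(\<Sum>j\<in>J. \<Sum>i\<in>Tset E S j. \<bar>x i\<bar>) = real d * X"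
    unfolding J_def X_def by (rule double_count[OF ue Sn])
  have maxeq: "Max ((\<lambda>i. \<bar>x i\<bar>) ` Tset E S j) = a j" if j: "j \<in> J" for j
  proof (rule Max_eqI)
    show "finite ((\<lambda>i. \<bar>x i\<bar>) ` Tset E S j)" using Tset_fin[OF Sn] by simp
    show "a j \<in> (\<lambda>i. \<bar>x i\<bar>) ` Tset E S j" using g j unfolding a_def by auto
    fix v assume "v \<in> (\<lambda>i. \<bar>x i\<bar>) ` Tset E S j"
    thus "v \<le> a j" using g j unfolding a_def by auto
  qed
  have AF: "(1-\<epsilon>)*real d*X \<le> A"
  proof -
    have "(1-\<epsilon>)*real d*(\<Sum>i\<in>S. \<bar>x i\<bar>) \<le> (\<Sum>j\<in>nbhd E S. Max ((\<lambda>i. \<bar>x i\<bar>) ` Tset E S j))"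
      by (rule F_max[OF ue Sn cardS]) simp
    thus ?thesis unfolding A_def X_def J_def[symmetric] using maxeq by simp
  qed
  have up: "Y \<le> real d * X"
  proof -
    have "Y \<le> (\<Sum>j\<in>J. a j + b j)" unfolding Y_def using yup by (intro sum_mono) auto
    also have "\<dots> = real d * X" using DC wj by simp
    finally show ?thesis .
  qed
  have low: "2 * A - real d * X \<le> Y"
  proof -
    have "(\<Sum>j\<in>J. a j - b j) \<le> Y" unfolding Y_def using ylow by (intro sum_mono) auto
    moreover have "(\<Sum>j\<in>J. a j - b j) = A - (\<Sum>j\<in>J. b j)" unfolding A_def by (simp add: sum_subtractf)
    moreover have "(\<Sum>j\<in>J. a j + b j) = A + (\<Sum>j\<in>J. b j)" unfolding A_def by (simp add: sum.distrib)
    moreover have "(\<Sum>j\<in>J. a j + b j) = real d * X" using DC wj by simp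
    ultimately show ?thesis by linarith
  qed
  have "(1 - 2*\<epsilon>)*real d*X \<le> Y"
  proof -
    have "(1 - 2*\<epsilon>)*real d*X = 2 * ((1-\<epsilon>)*real d*X) - real d * X" by (simp add: algebra_simps)
    thus ?thesis using AF low by linarith
  qed
  thus ?thesis using up unfolding X_def Y_def J_def y_def by simp
qed

lemma sumX:
  fixes f :: "real \<Rightarrow> real" and x :: "nat \<Rightarrow> real" assumes "f 0 = 0"
  shows "(\<Sum>i<n. f \<bar>x i\<bar>) = (\<Sum>i\<in>{i\<in>{..<n}. x i \<noteq> 0}. f \<bar>x i\<bar>)"
  by (rule sum.mono_neutral_right) (use assms in auto)

lemma sumY:
  fixes f :: "real \<Rightarrow> real" assumes ue: "unbalanced_expander n m d k \<epsilon> E" and f0: "f 0 = 0"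
  shows "(\<Sum>j<m. f (mat_vec n (adj_matrix E) x j)) = (\<Sum>j\<in>nbhd E {i\<in>{..<n}. x i \<noteq> 0}. f (mat_vec n (adj_matrix E) x j))"
proof (rule sum.mono_neutral_right)
  show "nbhd E {i\<in>{..<n}. x i \<noteq> 0} \<subseteq> {..<m}" using nbhd_sub(1)[OF ue] .
  show "\<forall>j\<in>{..<m} - nbhd E {i\<in>{..<n}. x i \<noteq> 0}. f (mat_vec n (adj_matrix E) x j) = 0"
  proof
    fix j assume "j \<in> {..<m} - nbhd E {i\<in>{..<n}. x i \<noteq> 0}"
    hence "Tset E {i\<in>{..<n}. x i \<noteq> 0} j = {}" unfolding Tset_def nbhd_def by auto
    thus "f (mat_vec n (adj_matrix E) x j) = 0" using y_eq[OF ue] f0 by simp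
  qed
qed simp

lemma root_up:
  fixes X Y c q :: real assumes "0 \<le> X" "0 \<le> c" "0 < q" "q \<le> 1" "Y \<le> (1+c) * X" "0 \<le> Y"
  shows "Y powr q \<le> (1+c) * X powr q"
proof -
  have "Y powr q \<le> ((1+c)*X) powr q" using assms by (intro powr_mono2) auto
  also have "\<dots> = (1+c) powr q * X powr q" using assms by (simp add: powr_mult)
  also have "(1+c) powr q \<le> (1+c) powr 1" using assms by (intro powr_mono) auto
  hence "(1+c) powr q * X powr q \<le> (1+c) * X powr q" using assms by (intro mult_right_mono) auto
  finally show ?thesis .
qed

lemma root_low:
  fixes X Y c q :: real assumes "0 \<le> X" "0 < q" "q \<le> 1" "(1-c) * X \<le> Y" "0 \<le> c"
  shows "(1-c) * X powr q \<le> Y powr q"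
proof (cases "1 - c \<le> 0")
  case True
  hence "(1-c) * X powr q \<le> 0" by (simp add: mult_nonpos_nonneg)
  thus ?thesis by (meson order_trans powr_ge_zero)
next
  case False
  have c1: "1 - c \<le> 1" using assms(5) by linarith
  have "(1-c) = ((1-c) powr q) powr (1/q)" using False assms by (simp add: powr_powr)
  also have "\<dots> \<le> (1-c) powr q"
  proof (rule powr_le_one_le)
    show "0 < (1-c) powr q" using False by simp
    have "(1-c) powr q \<le> 1 powr q" using False c1 assms by (intro powr_mono2) auto
    thus "(1-c) powr q \<le> 1" by simp
    show "1 \<le> 1/q" using assms by simp
  qed
  finally have h: "1-c \<le> (1-c) powr q" .
  have "(1-c) * X powr q \<le> (1-c) powr q * X powr q" using h by (intro mult_right_mono) auto
  also have "\<dots> = ((1-c) * X) powr q" using False assms by (simp add: powr_mult)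
  also have "\<dots> \<le> Y powr q" using False assms by (intro powr_mono2) auto
  finally show ?thesis .
qed

theorem theorem1:
  shows "\<exists>C::real. C > 1 \<and>
    (\<forall>n m d k (\<epsilon>::real) E (p::real) (x::nat \<Rightarrow> real).
       n \<ge> 2 \<longrightarrow> unbalanced_expander n m d k \<epsilon> E \<longrightarrow>
       0 < \<epsilon> \<longrightarrow> 1 / \<epsilon> < real n \<longrightarrow> 1 \<le> d \<longrightarrow> d < n \<longrightarrow>
       1 \<le> p \<longrightarrow> p \<le> 1 + 1 / ln (real n) \<longrightarrow> sparse n k x \<longrightarrow>
       (1 - C * \<epsilon>) * pnorm n p x
          \<le> pnorm m p (\<lambda>j. real d powr (- 1 / p) * mat_vec n (adj_matrix E) x j) \<and>
       pnorm m p (\<lambda>j. real d powr (- 1 / p) * mat_vec n (adj_matrix E) x j)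
          \<le> (1 + C * \<epsilon>) * pnorm n p x)
    \<and> (\<forall>n m d k (\<epsilon>::real) E (x::nat \<Rightarrow> real).
       n \<ge> 2 \<longrightarrow> unbalanced_expander n m d k \<epsilon> E \<longrightarrow>
       0 < \<epsilon> \<longrightarrow> 1 / \<epsilon> < real n \<longrightarrow> 1 \<le> d \<longrightarrow> d < n \<longrightarrow> sparse n k x \<longrightarrow>
       (1 - 2 * \<epsilon>) * pnorm n 1 x \<le> pnorm m 1 (mat_vec n (adj_matrix E) x) / real d \<and>
       pnorm m 1 (mat_vec n (adj_matrix E) x) / real d \<le> pnorm n 1 x)"
proof (intro exI[of _ 90] conjI allI impI)
  show "(1::real) < 90" by simp
next
  fix n m d k \<epsilon> E p and x :: "nat \<Rightarrow> real"
  assume n2: "2 \<le> n" and ue: "unbalanced_expander n m d k \<epsilon> E" and eps: "0 < \<epsilon>"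
    and en: "1 / \<epsilon> < real n" and d1: "1 \<le> d" and dn: "d < n" and p1: "1 \<le> p"
    and pn: "p \<le> 1 + 1 / ln (real n)" and sp: "sparse n k x"
  define S where "S = {i\<in>{..<n}. x i \<noteq> 0}"
  define y where "y = mat_vec n (adj_matrix E) x"
  define X where "X = (\<Sum>i\<in>S. \<bar>x i\<bar> powr p)"
  define Y where "Y = (\<Sum>j\<in>nbhd E S. \<bar>y j\<bar> powr p)"
  have M: "(1 - 90*\<epsilon>)*real d*X \<le> Y \<and> Y \<le> (1 + 90*\<epsilon>)*real d*X"
    using main_p[OF ue n2 eps en p1 pn sp] unfolding X_def Y_def S_def y_def .
  have dpos: "0 < real d" using d1 by simp
  have Xnn: "0 \<le> X" unfolding X_def by (simp add: sum_nonneg)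
  have Ynn: "0 \<le> Y" unfolding Y_def by (simp add: sum_nonneg)
  have px: "pnorm n p x = X powr (1/p)"
    unfolding pnorm_def X_def S_def using sumX[where f="\<lambda>t. t powr p" and n=n and x=x] by simp
  have py: "pnorm m p (\<lambda>j. real d powr (- 1 / p) * y j) = (Y / real d) powr (1/p)"
  proof -
    have "(\<Sum>j<m. \<bar>real d powr (- 1 / p) * y j\<bar> powr p) = (\<Sum>j<m. (1 / real d) * \<bar>y j\<bar> powr p)"
    proof (rule sum.cong)
      fix j
      have "\<bar>real d powr (- 1 / p) * y j\<bar> powr p = (real d powr (- 1 / p)) powr p * \<bar>y j\<bar> powr p"
        by (simp add: abs_mult powr_mult)
      also have "(real d powr (- 1 / p)) powr p = 1 / real d"
      proof -
        have e: "- 1 / p * p = -1" using p1 by simp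
        show ?thesis by (simp only: powr_powr e) simp
      qed
      finally show "\<bar>real d powr (- 1 / p) * y j\<bar> powr p = (1 / real d) * \<bar>y j\<bar> powr p" .
    qed simp
    also have "\<dots> = (1 / real d) * Y"
      unfolding Y_def S_def y_def sum_distrib_left[symmetric]
      using sumY[where f="\<lambda>t. \<bar>t\<bar> powr p" and x=x, OF ue] by simp
    finally show ?thesis unfolding pnorm_def by simp
  qed
  have q: "0 < 1/p" "1/p \<le> 1" using p1 by auto
  have l: "(1 - 90*\<epsilon>) * X \<le> Y / real d"
    using M dpos by (simp add: field_simps mult.commute mult.left_commute)
  have u: "Y / real d \<le> (1 + 90*\<epsilon>) * X"
    using M dpos by (simp add: field_simps mult.commute mult.left_commute)
  show "(1 - 90 * \<epsilon>) * pnorm n p x \<le> pnorm m p (\<lambda>j. real d powr (- 1 / p) * mat_vec n (adj_matrix E) x j)"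
    using root_low[OF Xnn q l] eps unfolding px py[unfolded y_def] by simp
  show "pnorm m p (\<lambda>j. real d powr (- 1 / p) * mat_vec n (adj_matrix E) x j) \<le> (1 + 90 * \<epsilon>) * pnorm n p x"
    using root_up[OF Xnn _ q u] eps Ynn dpos unfolding px py[unfolded y_def] by simp
next
  fix n m d k \<epsilon> E and x :: "nat \<Rightarrow> real"
  assume n2: "2 \<le> n" and ue: "unbalanced_expander n m d k \<epsilon> E" and eps: "0 < \<epsilon>"
    and en: "1 / \<epsilon> < real n" and d1: "1 \<le> d" and dn: "d < n" and sp: "sparse n k x"
  define S where "S = {i\<in>{..<n}. x i \<noteq> 0}"
  define X where "X = (\<Sum>i\<in>S. \<bar>x i\<bar>)"
  define Y where "Y = (\<Sum>j\<in>nbhd E S. \<bar>mat_vec n (adj_matrix E) x j\<bar>)"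
  have M: "(1 - 2*\<epsilon>)*real d*X \<le> Y \<and> Y \<le> real d*X"
    using main_1[OF ue sp] unfolding X_def Y_def S_def .
  have dpos: "0 < real d" using d1 by simp
  have Xnn: "0 \<le> X" unfolding X_def by (simp add: sum_nonneg)
  have Ynn: "0 \<le> Y" unfolding Y_def by (simp add: sum_nonneg)
  have px: "pnorm n 1 x = X"
    unfolding pnorm_def X_def S_def using sumX[where f="\<lambda>t. t" and n=n and x=x] by (simp add: sum_nonneg)
  have py: "pnorm m 1 (mat_vec n (adj_matrix E) x) = Y"
    unfolding pnorm_def Y_def S_def using sumY[where f="\<lambda>t. \<bar>t\<bar>" and x=x, OF ue] by (simp add: sum_nonneg)
  show "(1 - 2 * \<epsilon>) * pnorm n 1 x \<le> pnorm m 1 (mat_vec n (adj_matrix E) x) / real d"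
    unfolding px py using M dpos by (simp add: field_simps mult.commute mult.left_commute)
  show "pnorm m 1 (mat_vec n (adj_matrix E) x) / real d \<le> pnorm n 1 x"
    unfolding px py using M dpos by (simp add: field_simps mult.commute mult.left_commute)
qed

end
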